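(* Let $D=\mathrm{diag}(1,-1,1,-1,\ldots)=(1,-x)$, $\mathbb{F}^{\rm S}=(1,x(1+x))$, $\mathbb{L}^{\rm S}=(1+2x,x(1+x))$, let $\mathbf e=[1,1,1,\ldots]^T$, and let $C_n=\frac{1}{n+1}\binom{2n}{n}$ be the Catalan numbers. Then: (a) $D(\mathbb{F}^{\rm S})^{-1}D\,\mathbf e=[C_0,C_1,C_2,\ldots,C_n,\ldots]^T$; (b) $D(\mathbb{L}^{\rm S})^{-1}D\,\mathbf e=[C_0,3C_1,5C_2,\ldots,(2n+1)C_n,\ldots]^T$.
   Context: All matrices are infinite with rows and columns indexed by $0,1,2,\ldots$. For formal power series $g(x)=g_0+g_1x+\cdots$ with $g_0\ne0$ and $f(x)=f_1x+f_2x^2+\cdots$ with $f_1\ne0$, $(g(x),f(x))$ denotes the (Riordan) infinite lower triangular matrix whose $j$-th column has generating function $g(x)f(x)^j$. These matrices form a group under matrix multiplication with $(g,f)(h,l)=(g\cdot h(f),l(f))$. Since the matrices are lower triangular, each entry of the product with $\mathbf e$ is a finite row sum. *)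

theory Defs
  imports "HOL-Computational_Algebra.Formal_Power_Series"
begin

type_synonym imatrix = "nat \<Rightarrow> nat \<Rightarrow> real"

definition riordan :: "real fps \<Rightarrow> real fps \<Rightarrow> imatrix" where
  "riordan g f = (\<lambda>i j. fps_nth (g * f ^ j) i)"

definition lower_triangular :: "imatrix \<Rightarrow> bool" where
  "lower_triangular M \<longleftrightarrow> (\<forall>i j. i < j \<longrightarrow> M i j = 0)"

text \<open>Product of infinite lower triangular matrices (finite sums, since entries with
  k > i of the left factor vanish).\<close>
definition lt_mult :: "imatrix \<Rightarrow> imatrix \<Rightarrow> imatrix" where
  "lt_mult A B = (\<lambda>i j. \<Sum>k\<le>i. A i k * B k j)"

definition imat_one :: imatrix where
  "imat_one = (\<lambda>i j. if i = j then 1 else 0)"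

definition lt_inverse :: "imatrix \<Rightarrow> imatrix" where
  "lt_inverse A = (THE B. lower_triangular B \<and> lt_mult A B = imat_one \<and> lt_mult B A = imat_one)"

definition lt_mult_vec :: "imatrix \<Rightarrow> (nat \<Rightarrow> real) \<Rightarrow> (nat \<Rightarrow> real)" where
  "lt_mult_vec M v = (\<lambda>i. \<Sum>j\<le>i. M i j * v j)"

definition catalan :: "nat \<Rightarrow> real" where
  "catalan n = real ((2 * n) choose n) / real (n + 1)"

definition Dmat :: imatrix where
  "Dmat = riordan 1 (- fps_X)"

definition FS :: imatrix where
  "FS = riordan 1 (fps_X * (1 + fps_X))"

definition LS :: imatrix where
  "LS = riordan (1 + 2 * fps_X) (fps_X * (1 + fps_X))"

end

theory Submission
  imports Defs
begin
unbundle fps_syntax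

lemma pow_nth_zero: "(f::real fps) $ 0 = 0 \<Longrightarrow> n < k \<Longrightarrow> (f ^ k) $ n = 0"
  using startsby_zero_power_prefix by blast

lemma mult_pow_nth_zero: "(f::real fps) $ 0 = 0 \<Longrightarrow> i < k \<Longrightarrow> (g * f ^ k) $ i = 0"
  by (auto simp: fps_mult_nth pow_nth_zero intro!: sum.neutral)

lemma riordan_lt: "f $ 0 = 0 \<Longrightarrow> lower_triangular (riordan g f)"
  by (simp add: lower_triangular_def riordan_def mult_pow_nth_zero)

lemma mult_compose_nth:
  fixes g a f :: "real fps"
  assumes f0: "f $ 0 = 0"
  shows "(g * (a oo f)) $ i = (\<Sum>k\<le>i. (g * f ^ k) $ i * a $ k)"
proof -
  have "(g * (a oo f)) $ i = (\<Sum>m=0..i. g $ m * (\<Sum>k=0..i-m. a $ k * (f ^ k) $ (i - m)))"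
    by (simp add: fps_mult_nth fps_compose_nth)
  also have "\<dots> = (\<Sum>m=0..i. g $ m * (\<Sum>k=0..i. a $ k * (f ^ k) $ (i - m)))"
  proof -
    have inner: "(\<Sum>k=0..i-m. a $ k * (f ^ k) $ (i - m)) = (\<Sum>k=0..i. a $ k * (f ^ k) $ (i - m))" for m
      by (rule sum.mono_neutral_left) (auto simp: pow_nth_zero[OF f0])
    show ?thesis by (simp only: inner)
  qed
  also have "\<dots> = (\<Sum>k=0..i. a $ k * (\<Sum>m=0..i. g $ m * (f ^ k) $ (i - m)))"
    by (simp only: sum_distrib_left mult.left_commute) (rule sum.swap)
  also have "\<dots> = (\<Sum>k\<le>i. (g * f ^ k) $ i * a $ k)"
    by (simp add: fps_mult_nth atMost_atLeast0 mult_ac)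
  finally show ?thesis .
qed

lemma riordan_mult:
  fixes g f h l :: "real fps"
  assumes f0: "f $ 0 = 0"
  shows "lt_mult (riordan g f) (riordan h l) = riordan (g * (h oo f)) (l oo f)"
proof (intro ext)
  fix i j
  have "riordan (g * (h oo f)) (l oo f) i j = (g * ((h * l ^ j) oo f)) $ i"
    by (simp add: riordan_def fps_compose_mult_distrib[OF f0] fps_compose_power[OF f0] mult_ac)
  also have "\<dots> = lt_mult (riordan g f) (riordan h l) i j"
    by (simp add: mult_compose_nth[OF f0] lt_mult_def riordan_def)
  finally show "lt_mult (riordan g f) (riordan h l) i j = riordan (g * (h oo f)) (l oo f) i j" ..
qed


lemma lt_mult_one_left: "lt_mult imat_one M = M"
proof (intro ext)
  fix i j
  have "lt_mult imat_one M i j = (\<Sum>k\<le>i. if i = k then M i j else 0)"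
    unfolding lt_mult_def imat_one_def by (intro sum.cong) auto
  then show "lt_mult imat_one M i j = M i j" by simp
qed

lemma lt_mult_one_right: assumes "lower_triangular M" shows "lt_mult M imat_one = M"
proof (intro ext)
  fix i j
  have "lt_mult M imat_one i j = (\<Sum>k\<le>i. if j = k then M i j else 0)"
    unfolding lt_mult_def imat_one_def by (intro sum.cong) auto
  then show "lt_mult M imat_one i j = M i j" using assms by (auto simp: lower_triangular_def)
qed

lemma lt_mult_assoc:
  assumes "lower_triangular B"
  shows "lt_mult (lt_mult A B) C = lt_mult A (lt_mult B C)"
proof (intro ext)
  fix i j
  have inner: "(\<Sum>l\<le>k. B k l * C l j) = (\<Sum>l\<le>i. B k l * C l j)" if "k \<le> i" for k
    by (rule sum.mono_neutral_left) (use assms that in \<open>auto simp: lower_triangular_def\<close>)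
  have "lt_mult A (lt_mult B C) i j = (\<Sum>k\<le>i. A i k * (\<Sum>l\<le>i. B k l * C l j))"
    unfolding lt_mult_def by (intro sum.cong refl) (simp add: inner)
  also have "\<dots> = (\<Sum>l\<le>i. (\<Sum>k\<le>i. A i k * B k l) * C l j)"
    by (simp only: sum_distrib_left sum_distrib_right mult.assoc) (rule sum.swap)
  finally show "lt_mult (lt_mult A B) C i j = lt_mult A (lt_mult B C) i j"
    by (simp add: lt_mult_def)
qed

lemma lt_inverse_eq:
  assumes "lower_triangular A" "lower_triangular B" "lt_mult A B = imat_one" "lt_mult B A = imat_one"
  shows "lt_inverse A = B"
  unfolding lt_inverse_def
proof (rule the_equality)
  show "lower_triangular B \<and> lt_mult A B = imat_one \<and> lt_mult B A = imat_one" using assms by blast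
  fix B' assume B': "lower_triangular B' \<and> lt_mult A B' = imat_one \<and> lt_mult B' A = imat_one"
  have "B' = lt_mult B' (lt_mult A B)" using assms B' by (simp add: lt_mult_one_right)
  also have "\<dots> = lt_mult (lt_mult B' A) B" using assms by (simp add: lt_mult_assoc)
  also have "\<dots> = B" using B' by (simp add: lt_mult_one_left)
  finally show "B' = B" .
qed

lemma riordan_one: "riordan 1 fps_X = imat_one"
  by (rule ext)+ (simp add: riordan_def imat_one_def)

lemma row_sums:
  fixes G R \<phi> :: "real fps"
  assumes f0: "\<phi> $ 0 = 0" and R: "R * (1 - \<phi>) = G"
  shows "lt_mult_vec (riordan G \<phi>) (\<lambda>_. 1) n = R $ n"
proof -
  have "lt_mult_vec (riordan G \<phi>) (\<lambda>_. 1) n = (G * (\<Sum>j<Suc n. \<phi> ^ j)) $ n"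
    by (simp add: lt_mult_vec_def riordan_def sum_distrib_left fps_sum_nth lessThan_Suc_atMost)
  also have "G * (\<Sum>j<Suc n. \<phi> ^ j) = R * (1 - \<phi> ^ Suc n)"
    unfolding R[symmetric] by (simp only: one_diff_power_eq[of \<phi> "Suc n"] mult.assoc)
  also have "(R * (1 - \<phi> ^ Suc n)) $ n = R $ n"
    using mult_pow_nth_zero[OF f0, of n "Suc n" R] by (simp add: right_diff_distrib del: power_Suc)
  finally show ?thesis .
qed


definition cenA :: "real fps" where "cenA = Abs_fps (\<lambda>n. real ((2*n) choose n))"
definition catF :: "real fps" where "catF = Abs_fps catalan"

lemma central_rec: "real ((2*Suc n) choose Suc n) * real (Suc n) = 2 * (2 * real n + 1) * real ((2*n) choose n)"
proof -
  have e1: "Suc (2*n) * ((2*n) choose n) = (Suc (2*n) choose Suc n) * Suc n"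
    by (rule Suc_times_binomial_eq)
  have e2: "Suc (Suc (2*n)) * (Suc (2*n) choose n) = (Suc (Suc (2*n)) choose Suc n) * Suc n"
    by (rule Suc_times_binomial_eq)
  have e3: "Suc (2*n) choose Suc n = Suc (2*n) choose n"
    using binomial_symmetric[of "Suc n" "Suc (2*n)"] by simp
  have "(Suc (Suc (2*n)) choose Suc n) * Suc n * Suc n = Suc (Suc (2*n)) * (Suc (2*n) * ((2*n) choose n))"
    using e1 e2 e3 by (metis mult.assoc mult.commute)
  hence "(Suc (Suc (2*n)) choose Suc n) * Suc n * Suc n = 2 * Suc n * (Suc (2*n) * ((2*n) choose n))"
    by simp
  hence "((Suc (Suc (2*n)) choose Suc n) * Suc n) * Suc n = (2 * (Suc (2*n) * ((2*n) choose n))) * Suc n"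
    by (simp only: ac_simps)
  hence "(Suc (Suc (2*n)) choose Suc n) * Suc n = 2 * (Suc (2*n) * ((2*n) choose n))"
    by (metis mult_right_cancel Suc_neq_Zero)
  hence "real ((Suc (Suc (2*n)) choose Suc n) * Suc n) = real (2 * (Suc (2*n) * ((2*n) choose n)))"
    by (simp only:)
  thus ?thesis by (simp add: algebra_simps del: binomial_Suc_Suc)
qed

lemma num_mult_nth: "(numeral k * (f::real fps)) $ n = numeral k * f $ n"
  by (subst fps_numeral_fps_const) (rule fps_mult_left_const_nth)

lemma num_mult_nth_right: "((f::real fps) * numeral k) $ n = numeral k * f $ n"
  by (simp only: mult.commute[of f] num_mult_nth)

lemma cenA_ode: "(1 - 4 * fps_X) * fps_deriv cenA = 2 * cenA"
proof (rule fps_ext)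
  fix n
  show "((1 - 4 * fps_X) * fps_deriv cenA) $ n = (2 * cenA) $ n"
  proof (cases n)
    case 0 thus ?thesis by (simp add: cenA_def fps_mult_nth)
  next
    case (Suc m)
    have "((1 - 4 * fps_X) * fps_deriv cenA) $ n = fps_deriv cenA $ n - 4 * fps_deriv cenA $ m"
      using Suc by (simp add: algebra_simps num_mult_nth num_mult_nth_right)
    also have "\<dots> = 2 * cenA $ n"
      using central_rec[of n] Suc by (simp add: cenA_def algebra_simps)
    finally show ?thesis by (simp add: num_mult_nth)
  qed
qed


lemma cenA_sq: "(1 - 4 * fps_X) * cenA ^ 2 = 1"
proof -
  let ?B = "(1 - 4 * fps_X) * cenA ^ 2"
  have d: "fps_deriv ?B = 0"
  proof -
    have "fps_deriv ?B = (1 - 4 * fps_X) * (2 * cenA * fps_deriv cenA) - 4 * cenA ^ 2"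
      by (simp add: fps_deriv_power' algebra_simps power2_eq_square)
    also have "\<dots> = 2 * cenA * ((1 - 4 * fps_X) * fps_deriv cenA) - 4 * cenA ^ 2"
      by (simp only: ac_simps)
    also have "\<dots> = 0" by (simp add: cenA_ode power2_eq_square)
    finally show ?thesis .
  qed
  have "?B $ 0 = 1" by (simp add: cenA_def fps_mult_nth power2_eq_square)
  with d show ?thesis by (metis fps_deriv_eq_0_iff fps_const_1_eq_1)
qed

lemma T_eq: "(1 - 4 * fps_X) * cenA = 1 - 2 * fps_X * catF"
proof (rule fps_ext)
  fix n
  show "((1 - 4 * fps_X) * cenA) $ n = (1 - 2 * fps_X * catF) $ n"
  proof (cases n)
    case 0 thus ?thesis by (simp add: cenA_def fps_mult_nth)
  next
    case (Suc m)
    have "((1 - 4 * fps_X) * cenA) $ n = cenA $ n - 4 * cenA $ m"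
      using Suc by (simp add: algebra_simps num_mult_nth num_mult_nth_right)
    also have "\<dots> = - 2 * catalan m"
      using central_rec[of m] Suc by (simp add: cenA_def catalan_def field_simps)
    also have "\<dots> = (1 - 2 * fps_X * catF) $ n"
      using Suc by (simp add: catF_def num_mult_nth mult.assoc)
    finally show ?thesis .
  qed
qed

lemma catF_eq: "catF - fps_X * catF ^ 2 = 1"
proof -
  have sq: "(1 - 2 * fps_X * catF) ^ 2 = 1 - 4 * fps_X"
  proof -
    have "(1 - 2 * fps_X * catF) ^ 2 = (1 - 4 * fps_X) * ((1 - 4 * fps_X) * cenA ^ 2)"
      unfolding T_eq[symmetric] by (simp add: power2_eq_square ac_simps)
    thus ?thesis by (simp add: cenA_sq)
  qed
  have "fps_X * (4 * (catF - fps_X * catF ^ 2 - 1)) = (1 - 4 * fps_X) - (1 - 2 * fps_X * catF) ^ 2"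
    by (simp add: algebra_simps power2_eq_square)
  also have "\<dots> = 0" by (simp add: sq)
  finally have "fps_X * (4 * (catF - fps_X * catF ^ 2 - 1)) = (0::real fps)" .
  hence "4 * (catF - fps_X * catF ^ 2 - 1) = (0::real fps)"
    by (metis mult_eq_0_iff fps_X_neq_zero)
  hence "catF - fps_X * catF ^ 2 - 1 = 0"
    by (metis mult_eq_0_iff zero_neq_numeral)
  thus ?thesis by simp
qed


definition gS :: "real fps" where "gS = fps_X * (1 + fps_X)"
definition fb :: "real fps" where "fb = fps_X * (catF oo - fps_X)"

lemma mX0: "(- fps_X :: real fps) $ 0 = 0" by simp
lemma gS0: "gS $ 0 = 0" by (simp add: gS_def)
lemma gS1: "gS $ 1 = 1" by (simp add: gS_def fps_mult_nth)
lemma fb0: "fb $ 0 = 0" by (simp add: fb_def)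

lemma mXmX: "(- fps_X :: real fps) oo - fps_X = fps_X"
  by (simp add: fps_compose_uminus)

lemma Cneg: "(catF oo - fps_X) + fps_X * (catF oo - fps_X) ^ 2 = 1"
proof -
  have "(catF - fps_X * catF ^ 2) oo - fps_X = 1 oo - fps_X" by (simp only: catF_eq)
  thus ?thesis
    by (simp add: fps_compose_sub_distrib fps_compose_mult_distrib[OF mX0]
                  fps_compose_power[OF mX0, symmetric])
qed

lemma gS_fb: "gS oo fb = fps_X"
proof -
  have "gS oo fb = fb * (1 + fb)"
    by (simp add: gS_def fps_compose_mult_distrib[OF fb0] fps_compose_add_distrib fb0)
  also have "\<dots> = fps_X * ((catF oo - fps_X) + fps_X * (catF oo - fps_X) ^ 2)"
    by (simp add: fb_def algebra_simps power2_eq_square)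
  also have "\<dots> = fps_X" by (simp add: Cneg)
  finally show ?thesis .
qed

lemma fb_gS: "fb oo gS = fps_X"
proof -
  have g1: "gS $ 1 \<noteq> 0" using gS1 by (simp only:)
  have "fb = fps_X oo fb" by (simp add: fb0)
  also have "\<dots> = (fps_inv gS oo gS) oo fb" by (simp only: fps_inv[OF gS0 g1])
  also have "\<dots> = fps_inv gS oo (gS oo fb)" by (simp add: fps_compose_assoc[OF fb0 gS0])
  also have "\<dots> = fps_inv gS" by (simp add: gS_fb)
  finally have "fb = fps_inv gS" .
  thus ?thesis using fps_inv[OF gS0 g1] by (simp only:)
qed

lemma fb_mX: "fb oo - fps_X = - fps_X * catF"
proof -
  have "(catF oo - fps_X) oo - fps_X = catF"
    using fps_compose_assoc[OF mX0 mX0, of catF] by (simp add: mXmX)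
  thus ?thesis
    by (simp add: fb_def fps_compose_mult_distrib[OF mX0] fps_compose_uminus)
qed

lemma conj_D:
  "lt_mult (lt_mult Dmat (riordan h fb)) Dmat = riordan (h oo - fps_X) (fps_X * catF)"
proof -
  have a: "(fb oo - fps_X) $ 0 = 0" by (simp add: fb0)
  show ?thesis
    unfolding Dmat_def riordan_mult[OF mX0] riordan_mult[OF a]
    by (simp add: fb_mX fps_compose_uminus fps_compose_mult_distrib)
qed

lemma inv_FS: "lt_inverse FS = riordan 1 fb"
  unfolding FS_def gS_def[symmetric]
proof (rule lt_inverse_eq)
  show "lower_triangular (riordan 1 gS)" by (rule riordan_lt[OF gS0])
  show "lower_triangular (riordan 1 fb)" by (rule riordan_lt[OF fb0])
  show "lt_mult (riordan 1 gS) (riordan 1 fb) = imat_one"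
    by (simp add: riordan_mult[OF gS0] fb_gS riordan_one)
  show "lt_mult (riordan 1 fb) (riordan 1 gS) = imat_one"
    by (simp add: riordan_mult[OF fb0] gS_fb riordan_one)
qed


definition hL :: "real fps" where "hL = inverse (1 + 2 * fb)"

lemma hL_mult: "hL * (1 + 2 * fb) = 1"
  unfolding hL_def by (rule inverse_mult_eq_1) (simp add: fb0)

lemma comp_gS: "(1 + 2 * fb) oo gS = 1 + 2 * fps_X"
  by (simp add: fps_compose_add_distrib fps_compose_mult_distrib[OF gS0] fb_gS)

lemma comp_fb: "(1 + 2 * fps_X) oo fb = 1 + 2 * fb"
  by (simp add: fps_compose_add_distrib fps_compose_mult_distrib[OF fb0] fb0)

lemma inv_LS: "lt_inverse LS = riordan hL fb"
  unfolding LS_def gS_def[symmetric]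
proof (rule lt_inverse_eq)
  show "lower_triangular (riordan (1 + 2 * fps_X) gS)" by (rule riordan_lt[OF gS0])
  show "lower_triangular (riordan hL fb)" by (rule riordan_lt[OF fb0])
  have "(hL * (1 + 2 * fb)) oo gS = 1" by (simp add: hL_mult)
  hence "(hL oo gS) * ((1 + 2 * fb) oo gS) = 1"
    by (simp only: fps_compose_mult_distrib[OF gS0])
  hence "(1 + 2 * fps_X) * (hL oo gS) = 1"
    unfolding comp_gS by (simp only: mult.commute)
  thus "lt_mult (riordan (1 + 2 * fps_X) gS) (riordan hL fb) = imat_one"
    by (simp add: riordan_mult[OF gS0] fb_gS riordan_one)
  show "lt_mult (riordan hL fb) (riordan (1 + 2 * fps_X) gS) = imat_one"
    by (simp add: riordan_mult[OF fb0] gS_fb riordan_one comp_fb hL_mult)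
qed

lemma partA: "lt_mult_vec (lt_mult (lt_mult Dmat (lt_inverse FS)) Dmat) (\<lambda>_. 1) = (\<lambda>n. catalan n)"
proof (intro ext)
  fix n
  have "catF * (1 - fps_X * catF) = 1"
    using catF_eq by (simp add: algebra_simps power2_eq_square)
  hence "lt_mult_vec (riordan 1 (fps_X * catF)) (\<lambda>_. 1) n = catF $ n"
    by (intro row_sums) simp_all
  thus "lt_mult_vec (lt_mult (lt_mult Dmat (lt_inverse FS)) Dmat) (\<lambda>_. 1) n = catalan n"
    by (simp add: inv_FS conj_D catF_def)
qed

lemma partB: "lt_mult_vec (lt_mult (lt_mult Dmat (lt_inverse LS)) Dmat) (\<lambda>_. 1)
           = (\<lambda>n. (2 * real n + 1) * catalan n)"
proof (intro ext)
  fix n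
  define H where "H = hL oo - fps_X"
  define T where "T = 1 - 2 * fps_X * catF"
  have HT: "H * T = 1"
  proof -
    have "(hL * (1 + 2 * fb)) oo - fps_X = 1" by (simp add: hL_mult)
    thus ?thesis
      by (simp add: H_def T_def fps_compose_mult_distrib[OF mX0] fps_compose_add_distrib fb_mX
                    algebra_simps)
  qed
  have TA: "T * cenA = 1"
    using cenA_sq unfolding T_def T_eq[symmetric] by (simp add: power2_eq_square ac_simps)
  have HA: "H = cenA"
  proof -
    have "H = H * (T * cenA)" by (simp add: TA)
    also have "\<dots> = cenA" by (simp add: mult.assoc[symmetric] HT)
    finally show ?thesis .
  qed
  have R: "(2 * cenA - catF) * (1 - fps_X * catF) = H"
  proof -
    have "(2 * cenA - catF) * (1 - fps_X * catF) = T * cenA - (catF - fps_X * catF ^ 2) + cenA"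
      by (simp add: T_def algebra_simps power2_eq_square)
    thus ?thesis by (simp add: TA catF_eq HA)
  qed
  have "lt_mult_vec (riordan H (fps_X * catF)) (\<lambda>_. 1) n = (2 * cenA - catF) $ n"
    by (rule row_sums) (simp_all add: R)
  also have "\<dots> = (2 * real n + 1) * catalan n"
    by (simp add: num_mult_nth cenA_def catF_def catalan_def field_simps)
  finally show "lt_mult_vec (lt_mult (lt_mult Dmat (lt_inverse LS)) Dmat) (\<lambda>_. 1) n
      = (2 * real n + 1) * catalan n"
    by (simp add: inv_LS conj_D H_def)
qed

theorem corollary3p4:
  shows "lt_mult_vec (lt_mult (lt_mult Dmat (lt_inverse FS)) Dmat) (\<lambda>_. 1) = (\<lambda>n. catalan n)
     \<and> lt_mult_vec (lt_mult (lt_mult Dmat (lt_inverse LS)) Dmat) (\<lambda>_. 1)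
           = (\<lambda>n. (2 * real n + 1) * catalan n)"
  using partA partB by blast

end
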